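(* Let $X$ be a locally compact space, $Y$ a space, and $F\colon\mathcal{K}(X)\to\mathcal{K}(Y)$ a map satisfying: (1) if $K,L\in\mathcal{K}(X)$ and $K\subset L$, then $F(K)\subset F(L)$; $(3')$ for each open cover $\mathcal{W}$ of $X$ and each $y\in Y$ there exist a finite subfamily $\mathcal{E}\subset\mathcal{W}$ and a neighborhood $V_y$ of $y$ such that every compact $L\subset V_y$ satisfies $L\subset F(K)$ for some compact $K\subset\bigcup\mathcal{E}$. Then $Y$ is locally compact.
   Context: All spaces are completely regular. $\mathcal{K}(X)$ denotes the set of all compact subsets of $X$. *)

theory Defs
  imports "HOL-Analysis.Analysis"
begin

end

theory Submission
  imports Defs
begin

theorem proposition4p2:
  fixes X :: "'a topology" and Y :: "'b topology" and F :: "'a set \<Rightarrow> 'b set"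
  assumes X_tych: "completely_regular_space X" "Hausdorff_space X"
    and Y_tych: "completely_regular_space Y" "Hausdorff_space Y"
    and X_lc: "locally_compact_space X"
    and F_maps: "\<And>K. compactin X K \<Longrightarrow> compactin Y (F K)"
    and F_mono: "\<And>K L. compactin X K \<Longrightarrow> compactin X L \<Longrightarrow> K \<subseteq> L \<Longrightarrow> F K \<subseteq> F L"
    and F_cover: "\<And>\<W> y. (\<forall>W\<in>\<W>. openin X W) \<Longrightarrow> \<Union>\<W> = topspace X \<Longrightarrow> y \<in> topspace Y \<Longrightarrow>
        \<exists>\<E> U V. finite \<E> \<and> \<E> \<subseteq> \<W> \<and> openin Y U \<and> y \<in> U \<and> U \<subseteq> V \<and> V \<subseteq> topspace Y \<and>
          (\<forall>L. compactin Y L \<and> L \<subseteq> V \<longrightarrow>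
             (\<exists>K. compactin X K \<and> K \<subseteq> \<Union>\<E> \<and> L \<subseteq> F K))"
  shows "locally_compact_space Y"
  unfolding locally_compact_space_def
proof
  fix y assume y: "y \<in> topspace Y"
  define W where "W = {U. openin X U \<and> (\<exists>K. compactin X K \<and> U \<subseteq> K)}"
  have Wo: "\<forall>w\<in>W. openin X w" by (simp add: W_def)
  have Wc: "\<Union>W = topspace X"
  proof
    show "\<Union>W \<subseteq> topspace X" using Wo openin_subset by blast
    show "topspace X \<subseteq> \<Union>W"
    proof
      fix x assume "x \<in> topspace X"
      then obtain U K where "openin X U" "compactin X K" "x \<in> U" "U \<subseteq> K"
        using X_lc unfolding locally_compact_space_def by blast
      then show "x \<in> \<Union>W" unfolding W_def by blast
    qed
  qed
  from F_cover[OF Wo Wc y] obtain E U V where H: "finite E \<and> E \<subseteq> W \<and> openin Y U \<and> y \<in> U \<and> U \<subseteq> V \<and> V \<subseteq> topspace Y \<and>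
          (\<forall>L. compactin Y L \<and> L \<subseteq> V \<longrightarrow> (\<exists>K. compactin X K \<and> K \<subseteq> \<Union>E \<and> L \<subseteq> F K))"
    by (elim exE)
  then have E: "finite E" "E \<subseteq> W" and U: "openin Y U" "y \<in> U" "U \<subseteq> V"
    and V: "V \<subseteq> topspace Y"
    and L: "\<forall>L. compactin Y L \<and> L \<subseteq> V \<longrightarrow> (\<exists>K. compactin X K \<and> K \<subseteq> \<Union>E \<and> L \<subseteq> F K)"
    by simp_all
  have "\<forall>e\<in>E. \<exists>K. compactin X K \<and> e \<subseteq> K" using E(2) unfolding W_def by blast
  then obtain k where k: "\<And>e. e \<in> E \<Longrightarrow> compactin X (k e) \<and> e \<subseteq> k e" by metis
  define C where "C = \<Union>(k ` E)"
  have C: "compactin X C" unfolding C_def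
    using E(1) k by (intro compactin_Union) auto
  have EC: "\<Union>E \<subseteq> C" unfolding C_def using k by blast
  have "U \<subseteq> F C"
  proof
    fix z assume z: "z \<in> U"
    then have "compactin Y {z} \<and> {z} \<subseteq> V" using U V by auto
    then obtain K where "compactin X K" "K \<subseteq> \<Union>E" "{z} \<subseteq> F K" using L by blast
    then have "F K \<subseteq> F C" using F_mono[OF _ C] EC by (meson order_trans)
    then show "z \<in> F C" using \<open>{z} \<subseteq> F K\<close> by blast
  qed
  then show "\<exists>U K. openin Y U \<and> compactin Y K \<and> y \<in> U \<and> U \<subseteq> K"
    using U(1,2) F_maps[OF C] by blast
qed

end
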